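(* Let $\pi_n^\rho(\cdot\mid F_n)$ be an M-posterior whose loss $\rho$ is bounded from below and whose score $\psi$ is bounded on $\mathcal X\times\Theta$. Let $\pi$ be a bounded (possibly improper) prior density on $\Theta$, and assume one of: (a) $\int_\Theta|\theta|\pi(\theta)d\theta<\infty$ and $\sup_{\theta\in\Theta}\pi(\theta)|\theta|<\infty$; or (b) for each $x$, $\theta\mapsto\rho(x,\theta)$ is convex and coercive, i.e. $\rho(x,\theta)\to\infty$ as $|\theta|\to\infty$. Then $\pi_n^\rho(\cdot\mid F_n)$ is uniformly B-robust.
   Context: Sample space $\mathcal X\subseteq\mathbb R^d$, parameter space $\Theta\subseteq\mathbb R$ an interval containing $0$, loss $\rho:\mathcal X\times\Theta\to\mathbb R$ differentiable in $\theta$ with score $\psi(x,\theta)=\partial_\theta\rho(x,\theta)$, prior density $\pi\ge0$ on $\Theta$ (possibly improper). For a distribution $G$ on $\mathcal X$, the M-posterior is $\pi_n^\rho(\theta\mid G)=\pi(\theta)\exp(-n\mathbb E_G[\rho(X,\theta)])/\int_\Theta\pi(\theta')\exp(-n\mathbb E_G[\rho(X,\theta')])d\theta'$ whenever the denominator is finite and positive. $F_n$ is the empirical distribution of a fixed sample $x_1,\dots,x_n\in\mathcal X$. For $x_0\in\mathcal X$, $\epsilon\in[0,1]$, $F_{n,\epsilon,x_0}=(1-\epsilon)F_n+\epsilon\delta_{x_0}$. Posterior influence function: $\mathrm{PIF}(x_0;\theta,\rho,F_n)=\frac{d}{d\epsilon}\pi_n^\rho(\theta\mid F_{n,\epsilon,x_0})\big|_{\epsilon=0}$.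 The M-posterior is uniformly B-robust if $\sup_{\theta\in\Theta}\sup_{x_0\in\mathcal X}|\mathrm{PIF}(x_0;\theta,\rho,F_n)|<\infty$. *)

theory Defs
  imports "HOL-Analysis.Analysis"
begin

definition emp_risk :: "('a \<Rightarrow> real \<Rightarrow> real) \<Rightarrow> nat \<Rightarrow> (nat \<Rightarrow> 'a) \<Rightarrow> real \<Rightarrow> real" where
  "emp_risk \<rho> n xs \<theta> = (\<Sum>i<n. \<rho> (xs i) \<theta>) / real n"

text \<open>Expected loss under the contaminated distribution (1-eps) F_n + eps delta_x0.\<close>
definition cont_risk :: "('a \<Rightarrow> real \<Rightarrow> real) \<Rightarrow> nat \<Rightarrow> (nat \<Rightarrow> 'a) \<Rightarrow> 'a \<Rightarrow> real \<Rightarrow> real \<Rightarrow> real" where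
  "cont_risk \<rho> n xs x0 \<epsilon> \<theta> = (1 - \<epsilon>) * emp_risk \<rho> n xs \<theta> + \<epsilon> * \<rho> x0 \<theta>"

definition mpost_kernel :: "real set \<Rightarrow> (real \<Rightarrow> real) \<Rightarrow> ('a \<Rightarrow> real \<Rightarrow> real) \<Rightarrow> nat \<Rightarrow> (nat \<Rightarrow> 'a) \<Rightarrow> 'a \<Rightarrow> real \<Rightarrow> real \<Rightarrow> real" where
  "mpost_kernel \<Theta> \<pi> \<rho> n xs x0 \<epsilon> \<theta> = \<pi> \<theta> * exp (- real n * cont_risk \<rho> n xs x0 \<epsilon> \<theta>)"

text \<open>M-posterior density pi_n^rho(theta | F_{n,eps,x0}) (normalised over Theta w.r.t. Lebesgue measure).\<close>
definition mpost :: "real set \<Rightarrow> (real \<Rightarrow> real) \<Rightarrow> ('a \<Rightarrow> real \<Rightarrow> real) \<Rightarrow> nat \<Rightarrow> (nat \<Rightarrow> 'a) \<Rightarrow> 'a \<Rightarrow> real \<Rightarrow> real \<Rightarrow> real" where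
  "mpost \<Theta> \<pi> \<rho> n xs x0 \<epsilon> \<theta> =
     mpost_kernel \<Theta> \<pi> \<rho> n xs x0 \<epsilon> \<theta> / (LINT t:\<Theta>|lborel. mpost_kernel \<Theta> \<pi> \<rho> n xs x0 \<epsilon> t)"

text \<open>Uniform B-robustness: the posterior influence function (derivative in eps at eps = 0,
  eps ranging over [0,1]) exists for all theta in Theta and x0 in X and is uniformly bounded.\<close>
definition unif_B_robust :: "'a set \<Rightarrow> real set \<Rightarrow> (real \<Rightarrow> real) \<Rightarrow> ('a \<Rightarrow> real \<Rightarrow> real) \<Rightarrow> nat \<Rightarrow> (nat \<Rightarrow> 'a) \<Rightarrow> bool" where
  "unif_B_robust X \<Theta> \<pi> \<rho> n xs \<longleftrightarrow>
     (\<exists>B. \<forall>\<theta>\<in>\<Theta>. \<forall>x0\<in>X. \<exists>D.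
        ((\<lambda>\<epsilon>. mpost \<Theta> \<pi> \<rho> n xs x0 \<epsilon> \<theta>) has_real_derivative D) (at 0 within {0..1}) \<and> \<bar>D\<bar> \<le> B)"

end

theory Submission
  imports Defs "HOL-Probability.Sinc_Integral"
begin

lemma exp_ineq: "\<bar>exp (u::real) - 1\<bar> \<le> \<bar>u\<bar> * (1 + exp u)"
proof (cases "u \<ge> 0")
  case True
  have "exp (-u) \<ge> 1 - u" using exp_ge_add_one_self[of "-u"] by simp
  then have "exp (-u) * exp u \<ge> (1 - u) * exp u" by (intro mult_right_mono) auto
  then have "1 \<ge> exp u - u * exp u" by (simp add: exp_minus field_simps)
  then show ?thesis using True by (auto simp: algebra_simps)
next
  case False
  have e1: "exp u \<ge> 1 + u" using exp_ge_add_one_self[of u] by simp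
  have "exp u < 1" using False by simp
  then have "\<bar>exp u - 1\<bar> = 1 - exp u" by simp
  then have e3: "\<bar>exp u - 1\<bar> \<le> - u" using e1 by linarith
  have e2: "u * exp u \<le> 0" using mult_nonpos_nonneg[of u "exp u"] False by simp
  note e3
  also have "- u \<le> \<bar>u\<bar> * (1 + exp u)" using False e2 by (simp add: algebra_simps)
  finally show ?thesis .
qed

lemma integrable_exp_abs:
  fixes c :: real assumes c: "c > 0"
  shows "integrable lborel (\<lambda>x. (1 + \<bar>x\<bar>) * exp (- c * \<bar>x\<bar>))"
proof -
  define h where "h x = (1 + x) * exp (-x) * indicator {0<..} x" for x :: real
  have h: "integrable lborel h"
  proof -
    have a: "integrable lborel (\<lambda>x::real. x^0 * exp (-x) * indicator {0<..} x)"
      by (rule integrable.intros[OF has_bochner_integral_I0i_power_exp_m])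
    have b: "integrable lborel (\<lambda>x::real. x^1 * exp (-x) * indicator {0<..} x)"
      by (rule integrable.intros[OF has_bochner_integral_I0i_power_exp_m])
    have "integrable lborel (\<lambda>x::real. x^0 * exp (-x) * indicator {0<..} x + x^1 * exp (-x) * indicator {0<..} x)"
      using a b by (rule Bochner_Integration.integrable_add)
    then show ?thesis unfolding h_def by (simp add: algebra_simps)
  qed
  have h1: "integrable lborel (\<lambda>x. h (0 + c * x))"
    using h lborel_integrable_real_affine_iff[of c h 0] c by simp
  have h2: "integrable lborel (\<lambda>x. h (0 + (-c) * x))"
    using h lborel_integrable_real_affine_iff[of "-c" h 0] c by simp
  define C where "C = max 1 (1/c)"
  have C: "C > 0" "1 \<le> C" "1 \<le> C * c" using c by (auto simp: C_def field_simps max_def)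
  have sum: "integrable lborel (\<lambda>x. C * (h (0 + c * x) + h (0 + (-c) * x)))"
    using h1 h2 by auto
  show ?thesis
  proof (rule Bochner_Integration.integrable_bound[OF sum])
    show "(\<lambda>x. (1 + \<bar>x\<bar>) * exp (- c * \<bar>x\<bar>)) \<in> borel_measurable lborel" by measurable
    show "AE x in lborel. norm ((1 + \<bar>x\<bar>) * exp (- c * \<bar>x\<bar>)) \<le> norm (C * (h (0 + c * x) + h (0 + (-c) * x)))"
      using AE_lborel_singleton[of 0]
    proof eventually_elim
      case (elim x)
      have hn: "h y \<ge> 0" for y unfolding h_def by (auto simp: indicator_def)
      have "1 + \<bar>x\<bar> \<le> C * (1 + c * \<bar>x\<bar>)"
        using mult_right_mono[OF C(3), of "\<bar>x\<bar>"] C(2) by (simp add: algebra_simps)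
      then have key: "(1 + \<bar>x\<bar>) * exp (- c * \<bar>x\<bar>) \<le> C * ((1 + c * \<bar>x\<bar>) * exp (- (c * \<bar>x\<bar>)))"
        by (auto intro: mult_right_mono)
      have L: "norm ((1 + \<bar>x\<bar>) * exp (- c * \<bar>x\<bar>)) = (1 + \<bar>x\<bar>) * exp (- c * \<bar>x\<bar>)" by simp
      have R: "norm (C * (h (0 + c * x) + h (0 + (-c) * x))) = C * h (0 + c * x) + C * h (0 + (-c) * x)"
        using hn[of "0 + c * x"] hn[of "0 + (-c) * x"] C by (simp add: distrib_left)
      have p1: "0 \<le> C * h (0 + c * x)" "0 \<le> C * h (0 + (-c) * x)" using hn C by simp_all
      show ?case
      proof (cases "x > 0")
        case True
        then have "h (0 + c * x) = (1 + c * \<bar>x\<bar>) * exp (- (c * \<bar>x\<bar>))" using c by (simp add: h_def)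
        then have "C * h (0 + c * x) = C * ((1 + c * \<bar>x\<bar>) * exp (- (c * \<bar>x\<bar>)))" by simp
        then show ?thesis using key p1 L R by linarith
      next
        case False
        then have "x < 0" using elim by auto
        then have "h (0 + (-c) * x) = (1 + c * \<bar>x\<bar>) * exp (- (c * \<bar>x\<bar>))" using c by (simp add: h_def indicator_def mult_less_0_iff abs_if)
        then have "C * h (0 + (-c) * x) = C * ((1 + c * \<bar>x\<bar>) * exp (- (c * \<bar>x\<bar>)))" by simp
        then show ?thesis using key p1 L R by linarith
      qed
    qed
  qed
qed

lemma deriv_under_integral:
  fixes F :: "real \<Rightarrow> real \<Rightarrow> real" and F' w :: "real \<Rightarrow> real" and \<delta> :: real
  assumes \<delta>: "\<delta> > 0"
    and meas: "\<And>e. F e \<in> borel_measurable lborel"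
    and F'm: "F' \<in> borel_measurable lborel"
    and int0: "integrable lborel (F 0)"
    and intw: "integrable lborel w"
    and lim: "\<And>x. ((\<lambda>e. (F e x - F 0 x) / e) \<longlongrightarrow> F' x) (at_right 0)"
    and bnd: "\<And>e x. 0 < e \<Longrightarrow> e \<le> \<delta> \<Longrightarrow> \<bar>F e x - F 0 x\<bar> \<le> e * w x"
  shows "((\<lambda>e. integral\<^sup>L lborel (F e)) has_real_derivative integral\<^sup>L lborel F') (at 0 within {0..1})"
proof -
  have [measurable]: "F e \<in> borel_measurable lborel" for e by (rule meas)
  have wpos: "w x \<ge> 0" for x
  proof -
    have "\<bar>F \<delta> x - F 0 x\<bar> \<le> \<delta> * w x" using bnd[of \<delta> x] \<delta> by auto
    then have "0 \<le> \<delta> * w x" by linarith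
    then show ?thesis using \<delta> by (simp add: zero_le_mult_iff)
  qed
  have intF: "integrable lborel (F e)" if "0 < e" "e \<le> \<delta>" for e
  proof -
    have i: "integrable lborel (\<lambda>x. \<bar>F 0 x\<bar> + e * w x)" using int0 intw by auto
    show ?thesis
    proof (rule Bochner_Integration.integrable_bound[OF i])
      show "F e \<in> borel_measurable lborel" by (rule meas)
      show "AE x in lborel. norm (F e x) \<le> norm (\<bar>F 0 x\<bar> + e * w x)"
      proof (rule AE_I2)
        fix x
        have "\<bar>F e x - F 0 x\<bar> \<le> e * w x" using bnd that by auto
        moreover have "0 \<le> e * w x" using wpos that by simp
        ultimately show "norm (F e x) \<le> norm (\<bar>F 0 x\<bar> + e * w x)" by auto
      qed
    qed
  qed
  define s where "s t x = (F (inverse t) x - F 0 x) * t" for t x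
  have lim1: "((\<lambda>t. integral\<^sup>L lborel (s t)) \<longlongrightarrow> integral\<^sup>L lborel F') at_top"
  proof (rule integral_dominated_convergence_at_top[where w=w])
    show "F' \<in> borel_measurable lborel" by fact
    show "s t \<in> borel_measurable lborel" for t unfolding s_def by measurable
    show "integrable lborel w" by fact
    show "AE x in lborel. ((\<lambda>t. s t x) \<longlongrightarrow> F' x) at_top"
    proof (rule AE_I2)
      fix x
      from lim[of x, unfolded filterlim_at_right_to_top]
      show "((\<lambda>t. s t x) \<longlongrightarrow> F' x) at_top" by (simp add: s_def divide_inverse)
    qed
    show "\<forall>\<^sub>F t in at_top. AE x in lborel. norm (s t x) \<le> w x"
      unfolding eventually_at_top_linorder
    proof (intro exI[of _ "1/\<delta>"] allI impI AE_I2)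
      fix t x assume t: "1/\<delta> \<le> t"
      then have tpos: "t > 0" using \<delta> by (smt (verit) divide_pos_pos)
      have "inverse t \<le> \<delta>" using t \<delta> tpos by (simp add: field_simps)
      then have "\<bar>F (inverse t) x - F 0 x\<bar> \<le> inverse t * w x" using bnd tpos by auto
      then have m: "\<bar>F (inverse t) x - F 0 x\<bar> * t \<le> inverse t * w x * t" using tpos by (intro mult_right_mono) auto
      have e1: "inverse t * w x * t = w x" using tpos by simp
      have e2: "norm (s t x) = \<bar>F (inverse t) x - F 0 x\<bar> * t" using tpos by (simp add: s_def abs_mult)
      show "norm (s t x) \<le> w x" using m e1 e2 by linarith
    qed
  qed
  have ev: "\<forall>\<^sub>F t in at_top. integral\<^sup>L lborel (s t) =
      (integral\<^sup>L lborel (F (inverse t)) - integral\<^sup>L lborel (F 0)) / inverse t"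
    unfolding eventually_at_top_linorder
  proof (intro exI[of _ "1/\<delta>"] allI impI)
    fix t assume t: "1/\<delta> \<le> t"
    then have tpos: "t > 0" using \<delta> by (smt (verit) divide_pos_pos)
    have "inverse t \<le> \<delta>" using t \<delta> tpos by (simp add: field_simps)
    then have i: "integrable lborel (F (inverse t))" using intF tpos by auto
    have "integral\<^sup>L lborel (s t) = integral\<^sup>L lborel (\<lambda>x. F (inverse t) x - F 0 x) * t"
      unfolding s_def by (rule integral_mult_left_zero)
    also have "\<dots> = (integral\<^sup>L lborel (F (inverse t)) - integral\<^sup>L lborel (F 0)) * t"
      using i int0 by simp
    finally show "integral\<^sup>L lborel (s t) =
      (integral\<^sup>L lborel (F (inverse t)) - integral\<^sup>L lborel (F 0)) / inverse t" by (simp add: divide_inverse)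
  qed
  have "((\<lambda>t. (integral\<^sup>L lborel (F (inverse t)) - integral\<^sup>L lborel (F 0)) / inverse t)
      \<longlongrightarrow> integral\<^sup>L lborel F') at_top"
    using Lim_transform_eventually[OF lim1 ev] .
  then have "((\<lambda>e. (integral\<^sup>L lborel (F e) - integral\<^sup>L lborel (F 0)) / e)
      \<longlongrightarrow> integral\<^sup>L lborel F') (at_right 0)"
    unfolding filterlim_at_right_to_top .
  then show ?thesis
    unfolding has_field_derivative_iff at_within_Icc_at_right[of "0::real" 1, OF zero_less_one]
    by simp
qed

theorem mainTheorem6:
  fixes X :: "'a::euclidean_space set" and \<Theta> :: "real set"
    and \<rho> :: "'a \<Rightarrow> real \<Rightarrow> real" and \<psi> :: "'a \<Rightarrow> real \<Rightarrow> real"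
    and \<pi> :: "real \<Rightarrow> real" and n :: nat and xs :: "nat \<Rightarrow> 'a"
  assumes Theta_interval: "is_interval \<Theta>" and zero_in: "0 \<in> \<Theta>"
    and score: "\<And>x \<theta>. x \<in> X \<Longrightarrow> \<theta> \<in> \<Theta> \<Longrightarrow> (\<rho> x has_real_derivative \<psi> x \<theta>) (at \<theta> within \<Theta>)"
    and n_pos: "n \<ge> 1" and sample: "\<And>i. i < n \<Longrightarrow> xs i \<in> X"
    and prior_meas: "\<pi> \<in> borel_measurable lborel"
    and prior_nonneg: "\<And>\<theta>. \<theta> \<in> \<Theta> \<Longrightarrow> \<pi> \<theta> \<ge> 0"
    and post_int: "set_integrable lborel \<Theta> (mpost_kernel \<Theta> \<pi> \<rho> n xs (xs 0) 0)"
    and post_pos: "(LINT t:\<Theta>|lborel. mpost_kernel \<Theta> \<pi> \<rho> n xs (xs 0) 0 t) > 0"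
    and rho_lb: "\<exists>L. \<forall>x\<in>X. \<forall>\<theta>\<in>\<Theta>. L \<le> \<rho> x \<theta>"
    and psi_bdd: "\<exists>M. \<forall>x\<in>X. \<forall>\<theta>\<in>\<Theta>. \<bar>\<psi> x \<theta>\<bar> \<le> M"
    and prior_bdd: "\<exists>P. \<forall>\<theta>\<in>\<Theta>. \<pi> \<theta> \<le> P"
    and cases:
      "(set_integrable lborel \<Theta> (\<lambda>\<theta>. \<bar>\<theta>\<bar> * \<pi> \<theta>) \<and> (\<exists>C. \<forall>\<theta>\<in>\<Theta>. \<pi> \<theta> * \<bar>\<theta>\<bar> \<le> C))
       \<or> (\<forall>x\<in>X. convex_on \<Theta> (\<rho> x) \<and>
             (\<forall>K. \<exists>R. \<forall>\<theta>\<in>\<Theta>. R \<le> \<bar>\<theta>\<bar> \<longrightarrow> K \<le> \<rho> x \<theta>))"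
  shows "unif_B_robust X \<Theta> \<pi> \<rho> n xs"
proof -
  obtain L where L: "\<And>x \<theta>. x \<in> X \<Longrightarrow> \<theta> \<in> \<Theta> \<Longrightarrow> L \<le> \<rho> x \<theta>" using rho_lb by blast
  obtain M where M: "\<And>x \<theta>. x \<in> X \<Longrightarrow> \<theta> \<in> \<Theta> \<Longrightarrow> \<bar>\<psi> x \<theta>\<bar> \<le> M" using psi_bdd by blast
  obtain P where P: "\<And>\<theta>. \<theta> \<in> \<Theta> \<Longrightarrow> \<pi> \<theta> \<le> P" using prior_bdd by blast
  have x0X: "xs 0 \<in> X" using sample n_pos by auto
  have M0: "0 \<le> M" using M[OF x0X zero_in] by linarith
  have P0: "0 \<le> P" using P[OF zero_in] prior_nonneg[OF zero_in] by linarith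
  have Thb: "\<Theta> \<in> sets borel" by (rule real_interval_borel_measurable[OF Theta_interval])
  have cvx: "convex \<Theta>" using Theta_interval is_interval_convex_1 by blast
  have npos: "real n > 0" using n_pos by simp
  have lip: "\<bar>\<rho> x s - \<rho> x t\<bar> \<le> M * \<bar>s - t\<bar>" if "x \<in> X" "s \<in> \<Theta>" "t \<in> \<Theta>" for x s t
  proof -
    have "norm (\<rho> x s - \<rho> x t) \<le> M * norm (s - t)"
      by (rule field_differentiable_bound[OF cvx, where f="\<rho> x" and f'="\<psi> x"])
         (use score[OF that(1)] M[OF that(1)] that in auto)
    then show ?thesis by simp
  qed
  have rcont: "continuous_on \<Theta> (\<rho> x)" if "x \<in> X" for x
    using DERIV_continuous_on score[OF that] by blast
  define E where "E t = emp_risk \<rho> n xs t" for t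
  have E_def': "E t = (\<Sum>i<n. \<rho> (xs i) t) / real n" for t by (simp add: E_def emp_risk_def)
  have E_lb: "L \<le> E t" if "t \<in> \<Theta>" for t
  proof -
    have "real (card {..<n}) * L \<le> (\<Sum>i<n. \<rho> (xs i) t)"
      by (rule sum_bounded_below) (use L sample that in auto)
    then show ?thesis using npos by (simp add: E_def' field_simps)
  qed
  have E_lip: "\<bar>E s - E t\<bar> \<le> M * \<bar>s - t\<bar>" if "s \<in> \<Theta>" "t \<in> \<Theta>" for s t
  proof -
    have "\<bar>(\<Sum>i<n. \<rho> (xs i) s) - (\<Sum>i<n. \<rho> (xs i) t)\<bar> = \<bar>\<Sum>i<n. (\<rho> (xs i) s - \<rho> (xs i) t)\<bar>"
      by (simp add: sum_subtractf)
    also have "\<dots> \<le> (\<Sum>i<n. \<bar>\<rho> (xs i) s - \<rho> (xs i) t\<bar>)" by (rule sum_abs)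
    also have "\<dots> \<le> (\<Sum>i<n. M * \<bar>s - t\<bar>)" by (rule sum_mono) (use lip sample that in auto)
    also have "\<dots> = real n * (M * \<bar>s - t\<bar>)" by simp
    finally have h: "\<bar>(\<Sum>i<n. \<rho> (xs i) s) - (\<Sum>i<n. \<rho> (xs i) t)\<bar> \<le> real n * (M * \<bar>s - t\<bar>)" .
    have "E s - E t = ((\<Sum>i<n. \<rho> (xs i) s) - (\<Sum>i<n. \<rho> (xs i) t)) / real n"
      by (simp add: E_def' diff_divide_distrib)
    then have "\<bar>E s - E t\<bar> = \<bar>(\<Sum>i<n. \<rho> (xs i) s) - (\<Sum>i<n. \<rho> (xs i) t)\<bar> / real n"
      using npos by simp
    also have "\<dots> \<le> real n * (M * \<bar>s - t\<bar>) / real n" using h npos by (intro divide_right_mono) auto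
    also have "\<dots> = M * \<bar>s - t\<bar>" using npos by simp
    finally show ?thesis .
  qed
  have E_fun: "E = (\<lambda>t. (\<Sum>i<n. \<rho> (xs i) t) / real n)" by (rule ext) (simp add: E_def')
  have E_cont: "continuous_on \<Theta> E"
    unfolding E_fun by (intro continuous_on_divide continuous_on_sum continuous_on_const) (use rcont sample n_pos in auto)
  define k0 where "k0 t = \<pi> t * exp (- real n * E t)" for t
  have kern: "mpost_kernel \<Theta> \<pi> \<rho> n xs x0 e t = \<pi> t * exp (- real n * ((1 - e) * E t + e * \<rho> x0 t))" for x0 e t
    by (simp add: mpost_kernel_def cont_risk_def E_def)
  have kern0: "mpost_kernel \<Theta> \<pi> \<rho> n xs x0 0 t = k0 t" for x0 t by (simp add: kern k0_def)
  have k0nn: "0 \<le> k0 t" if "t \<in> \<Theta>" for t using prior_nonneg that by (simp add: k0_def)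
  have K1: "k0 t \<le> P * exp (- real n * L)" if "t \<in> \<Theta>" for t
    unfolding k0_def
  proof (rule mult_mono)
    show "exp (- real n * E t) \<le> exp (- real n * L)" using E_lb[OF that] npos by simp
  qed (use P prior_nonneg that P0 in auto)
  define G where "G t = indicator \<Theta> t * (\<pi> t * exp (-(real n / 2) * E t))" for t
  have Gnn: "0 \<le> G t" for t using prior_nonneg by (simp add: G_def indicator_def)
  have Gmeas[measurable]: "G \<in> borel_measurable lborel"
  proof -
    have "(\<lambda>t. indicator \<Theta> t *\<^sub>R exp (-(real n / 2) * E t)) \<in> borel_measurable borel"
      by (rule borel_measurable_continuous_on_indicator[OF Thb]) (intro continuous_intros E_cont)
    then have "(\<lambda>t. \<pi> t * (indicator \<Theta> t *\<^sub>R exp (-(real n / 2) * E t))) \<in> borel_measurable lborel"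
      using prior_meas by (intro borel_measurable_times) auto
    moreover have "G = (\<lambda>t. \<pi> t * (indicator \<Theta> t *\<^sub>R exp (-(real n / 2) * E t)))"
      by (rule ext) (simp add: G_def)
    ultimately show ?thesis by simp
  qed
  have kbound: "mpost_kernel \<Theta> \<pi> \<rho> n xs x0 e t \<le> exp (- real n * L / 2) * G t"
    if "x0 \<in> X" "0 \<le> e" "e \<le> 1/2" "t \<in> \<Theta>" for x0 e t
  proof -
    have h1: "e * L \<le> e * \<rho> x0 t" using L[OF that(1,4)] that(2) by (rule mult_left_mono)
    have h2: "0 \<le> (1/2 - e) * (E t - L)" using E_lb[OF that(4)] that(3) by simp
    have h3: "0 \<le> E t / 2 - e * E t - L / 2 + e * L" using h2 unfolding left_diff_distrib right_diff_distrib by linarith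
    have eq: "(1 - e) * E t + e * \<rho> x0 t = E t - e * E t + e * \<rho> x0 t" by (simp add: algebra_simps)
    have h4: "L / 2 + E t / 2 \<le> (1 - e) * E t + e * \<rho> x0 t" using h1 h3 eq by linarith
    have "- real n * ((1 - e) * E t + e * \<rho> x0 t) \<le> - real n * (L / 2 + E t / 2)"
      using h4 npos by simp
    also have "\<dots> = - real n * L / 2 + (-(real n / 2) * E t)" by (simp add: algebra_simps)
    finally have "exp (- real n * ((1 - e) * E t + e * \<rho> x0 t)) \<le> exp (- real n * L / 2) * exp (-(real n / 2) * E t)"
      by (simp add: mult_exp_exp)
    then have "\<pi> t * exp (- real n * ((1 - e) * E t + e * \<rho> x0 t)) \<le> \<pi> t * (exp (- real n * L / 2) * exp (-(real n / 2) * E t))"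
      using prior_nonneg[OF that(4)] by (rule mult_left_mono)
    then show ?thesis using that(4) by (simp add: kern G_def mult_ac)
  qed
  have KAB: "integrable lborel (\<lambda>t. (1 + \<bar>t\<bar>) * G t) \<and> (\<exists>K2. \<forall>t\<in>\<Theta>. k0 t * \<bar>t\<bar> \<le> K2)"
    using cases
  proof
    assume a: "set_integrable lborel \<Theta> (\<lambda>\<theta>. \<bar>\<theta>\<bar> * \<pi> \<theta>) \<and> (\<exists>C. \<forall>\<theta>\<in>\<Theta>. \<pi> \<theta> * \<bar>\<theta>\<bar> \<le> C)"
    then obtain C where C: "\<And>\<theta>. \<theta> \<in> \<Theta> \<Longrightarrow> \<pi> \<theta> * \<bar>\<theta>\<bar> \<le> C" by blast
    have ia: "integrable lborel (\<lambda>t. indicator \<Theta> t * (\<bar>t\<bar> * \<pi> t))" using a by (simp add: set_integrable_def)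
    have ib: "integrable lborel (\<lambda>t. exp (- real n * L / 2) * (2 * P * indicator {-1..1} t + 2 * (indicator \<Theta> t * (\<bar>t\<bar> * \<pi> t))))"
      using ia by (intro integrable_mult_right Bochner_Integration.integrable_add) auto
    have 1: "integrable lborel (\<lambda>t. (1 + \<bar>t\<bar>) * G t)"
    proof (rule Bochner_Integration.integrable_bound[OF ib])
      show "(\<lambda>t. (1 + \<bar>t\<bar>) * G t) \<in> borel_measurable lborel" by measurable
      show "AE t in lborel. norm ((1 + \<bar>t\<bar>) * G t) \<le> norm (exp (- real n * L / 2) * (2 * P * indicator {-1..1} t + 2 * (indicator \<Theta> t * (\<bar>t\<bar> * \<pi> t))))"
      proof (rule AE_I2)
        fix t
        have rn: "0 \<le> exp (- real n * L / 2) * (2 * P * indicator {-1..1} t + 2 * (indicator \<Theta> t * (\<bar>t\<bar> * \<pi> t)))"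
          using P0 prior_nonneg by (auto simp: indicator_def intro!: mult_nonneg_nonneg add_nonneg_nonneg)
        have "(1 + \<bar>t\<bar>) * G t \<le> exp (- real n * L / 2) * (2 * P * indicator {-1..1} t + 2 * (indicator \<Theta> t * (\<bar>t\<bar> * \<pi> t)))"
        proof (cases "t \<in> \<Theta>")
          case False then show ?thesis using rn by (simp add: G_def)
        next
          case True
          have pt: "0 \<le> \<pi> t" "\<pi> t \<le> P" using prior_nonneg P True by auto
          have e1: "exp (-(real n / 2) * E t) \<le> exp (- real n * L / 2)" using E_lb[OF True] npos by simp
          have g: "G t \<le> \<pi> t * exp (- real n * L / 2)" using True e1 pt by (simp add: G_def mult_left_mono)
          have "(1 + \<bar>t\<bar>) * \<pi> t \<le> 2 * P * indicator {-1..1} t + 2 * (\<bar>t\<bar> * \<pi> t)"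
          proof (cases "\<bar>t\<bar> \<le> 1")
            case True
            have "(1 + \<bar>t\<bar>) * \<pi> t \<le> 2 * \<pi> t" using mult_right_mono[of "1 + \<bar>t\<bar>" 2 "\<pi> t"] True pt by simp
            then have "(1 + \<bar>t\<bar>) * \<pi> t \<le> 2 * P" using pt by linarith
            moreover have "0 \<le> \<bar>t\<bar> * \<pi> t" using pt by simp
            ultimately show ?thesis using True by (simp add: indicator_def abs_le_iff)
          next
            case False
            have "(1 + \<bar>t\<bar>) * \<pi> t \<le> (2 * \<bar>t\<bar>) * \<pi> t" using mult_right_mono[of "1 + \<bar>t\<bar>" "2 * \<bar>t\<bar>" "\<pi> t"] False pt by simp
            then have "(1 + \<bar>t\<bar>) * \<pi> t \<le> 2 * (\<bar>t\<bar> * \<pi> t)" by (simp add: mult.assoc)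
            moreover have "0 \<le> 2 * P * indicator {-1..1} t" using P0 by simp
            ultimately show ?thesis by linarith
          qed
          then have "(1 + \<bar>t\<bar>) * G t \<le> (1 + \<bar>t\<bar>) * (\<pi> t * exp (- real n * L / 2))"
            using g by (intro mult_left_mono) auto
          also have "\<dots> = exp (- real n * L / 2) * ((1 + \<bar>t\<bar>) * \<pi> t)" by simp
          also have "\<dots> \<le> exp (- real n * L / 2) * (2 * P * indicator {-1..1} t + 2 * (\<bar>t\<bar> * \<pi> t))"
            using \<open>(1 + \<bar>t\<bar>) * \<pi> t \<le> _\<close> by (intro mult_left_mono) auto
          finally show ?thesis using True by simp
        qed
        then show "norm ((1 + \<bar>t\<bar>) * G t) \<le> norm (exp (- real n * L / 2) * (2 * P * indicator {-1..1} t + 2 * (indicator \<Theta> t * (\<bar>t\<bar> * \<pi> t))))"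
          using rn Gnn[of t] by simp
      qed
    qed
    have 2: "\<forall>t\<in>\<Theta>. k0 t * \<bar>t\<bar> \<le> C * exp (- real n * L)"
    proof
      fix t assume t: "t \<in> \<Theta>"
      have C0: "0 \<le> C" using C[OF t] mult_nonneg_nonneg[OF prior_nonneg[OF t] abs_ge_zero[of t]] by linarith
      have "k0 t * \<bar>t\<bar> = (\<pi> t * \<bar>t\<bar>) * exp (- real n * E t)" by (simp add: k0_def)
      also have "\<dots> \<le> C * exp (- real n * L)"
        using C[OF t] C0 prior_nonneg[OF t] E_lb[OF t] npos by (intro mult_mono) auto
      finally show "k0 t * \<bar>t\<bar> \<le> C * exp (- real n * L)" .
    qed
    show ?thesis using 1 2 by blast
  next
    assume b: "\<forall>x\<in>X. convex_on \<Theta> (\<rho> x) \<and> (\<forall>K. \<exists>R. \<forall>\<theta>\<in>\<Theta>. R \<le> \<bar>\<theta>\<bar> \<longrightarrow> K \<le> \<rho> x \<theta>)"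
    define x where "x = xs 0"
    have xX: "x \<in> X" using x0X by (simp add: x_def)
    have cv: "convex_on \<Theta> (\<rho> x)" using b xX by blast
    obtain R0 where R0: "\<And>\<theta>. \<theta> \<in> \<Theta> \<Longrightarrow> R0 \<le> \<bar>\<theta>\<bar> \<Longrightarrow> \<rho> x 0 + 1 \<le> \<rho> x \<theta>"
      using b xX by blast
    define R where "R = max R0 1"
    have Rpos: "R > 0" "R0 \<le> R" by (auto simp: R_def)
    have grow: "\<rho> x 0 + \<bar>\<theta>\<bar> / R \<le> \<rho> x \<theta>" if th: "\<theta> \<in> \<Theta>" "R \<le> \<bar>\<theta>\<bar>" for \<theta>
    proof -
      define l where "l = R / \<bar>\<theta>\<bar>"
      have tpos: "\<bar>\<theta>\<bar> > 0" using th Rpos by linarith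
      have l: "0 < l" "l \<le> 1" using tpos Rpos th by (auto simp: l_def field_simps)
      have sT: "(1 - l) *\<^sub>R 0 + l *\<^sub>R \<theta> \<in> \<Theta>"
        by (rule convexD[OF cvx zero_in th(1)]) (use l in auto)
      have abs_s: "\<bar>l * \<theta>\<bar> = R" using tpos Rpos by (simp add: l_def abs_mult)
      have "\<rho> x 0 + 1 \<le> \<rho> x (l * \<theta>)" using R0[of "l * \<theta>"] sT abs_s Rpos by simp
      also have "\<dots> \<le> (1 - l) * \<rho> x 0 + l * \<rho> x \<theta>"
        using convex_onD[OF cv, of l 0 \<theta>] l zero_in th by simp
      finally have "1 \<le> l * (\<rho> x \<theta> - \<rho> x 0)" by (simp add: algebra_simps)
      then have "1 / l \<le> \<rho> x \<theta> - \<rho> x 0" using l by (simp add: pos_divide_le_eq mult.commute)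
      moreover have "1 / l = \<bar>\<theta>\<bar> / R" using tpos Rpos by (simp add: l_def)
      ultimately show ?thesis by simp
    qed
    define Cb where "Cb = \<bar>\<rho> x 0\<bar> + \<bar>1 - L\<bar>"
    have lin: "\<bar>\<theta>\<bar> / R - Cb \<le> \<rho> x \<theta>" if th: "\<theta> \<in> \<Theta>" for \<theta>
    proof (cases "R \<le> \<bar>\<theta>\<bar>")
      case True
      have "- \<bar>\<rho> x 0\<bar> \<le> \<rho> x 0" by simp
      then show ?thesis using grow[OF th True] abs_ge_zero[of "1 - L"] unfolding Cb_def by linarith
    next
      case False
      then have "\<bar>\<theta>\<bar> / R < 1" using Rpos by (simp add: field_simps)
      moreover have "1 - L \<le> \<bar>1 - L\<bar>" by simp
      ultimately show ?thesis using L[OF xX th] abs_ge_zero[of "\<rho> x 0"] unfolding Cb_def by linarith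
    qed
    define D0 where "D0 = Cb - (real n - 1) * L"
    have nE: "\<bar>\<theta>\<bar> / R - D0 \<le> real n * E \<theta>" if th: "\<theta> \<in> \<Theta>" for \<theta>
    proof -
      have s1: "(\<Sum>i<n. \<rho> (xs i) \<theta>) = \<rho> (xs 0) \<theta> + (\<Sum>i\<in>{..<n}-{0}. \<rho> (xs i) \<theta>)"
        using sum.remove[of "{..<n}" 0 "\<lambda>i. \<rho> (xs i) \<theta>"] n_pos by simp
      have "real (card ({..<n}-{0})) * L \<le> (\<Sum>i\<in>{..<n}-{0}. \<rho> (xs i) \<theta>)"
        by (rule sum_bounded_below) (use L sample th in auto)
      moreover have "real (card ({..<n}-{0})) = real n - 1" using n_pos by (simp add: of_nat_diff)
      moreover have "real n * E \<theta> = (\<Sum>i<n. \<rho> (xs i) \<theta>)" using npos by (simp add: E_def')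
      ultimately show ?thesis using s1 lin[OF th] by (simp add: D0_def x_def)
    qed
    define c where "c = 1 / (2 * R)"
    have cpos: "c > 0" using Rpos by (simp add: c_def)
    have ex: "exp (- real n * E t) \<le> exp D0 * exp (- (\<bar>t\<bar> / R))" if t: "t \<in> \<Theta>" for t
      using nE[OF t] by (simp add: mult_exp_exp)
    have ex2: "exp (-(real n / 2) * E t) \<le> exp (D0 / 2) * exp (- c * \<bar>t\<bar>)" if t: "t \<in> \<Theta>" for t
    proof -
      have "-(real n / 2) * E t \<le> D0 / 2 + (- c * \<bar>t\<bar>)" using nE[OF t] Rpos by (simp add: c_def field_simps)
      then show ?thesis by (simp add: mult_exp_exp)
    qed
    have ib: "integrable lborel (\<lambda>t. P * exp (D0 / 2) * ((1 + \<bar>t\<bar>) * exp (- c * \<bar>t\<bar>)))"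
      using integrable_exp_abs[OF cpos] by simp
    have 1: "integrable lborel (\<lambda>t. (1 + \<bar>t\<bar>) * G t)"
    proof (rule Bochner_Integration.integrable_bound[OF ib])
      show "(\<lambda>t. (1 + \<bar>t\<bar>) * G t) \<in> borel_measurable lborel" by measurable
      show "AE t in lborel. norm ((1 + \<bar>t\<bar>) * G t) \<le> norm (P * exp (D0 / 2) * ((1 + \<bar>t\<bar>) * exp (- c * \<bar>t\<bar>)))"
      proof (rule AE_I2)
        fix t
        have rn: "0 \<le> P * exp (D0 / 2) * ((1 + \<bar>t\<bar>) * exp (- c * \<bar>t\<bar>))" using P0 by simp
        have "(1 + \<bar>t\<bar>) * G t \<le> P * exp (D0 / 2) * ((1 + \<bar>t\<bar>) * exp (- c * \<bar>t\<bar>))"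
        proof (cases "t \<in> \<Theta>")
          case False then show ?thesis using rn by (simp add: G_def)
        next
          case True
          have "G t \<le> P * (exp (D0 / 2) * exp (- c * \<bar>t\<bar>))"
            using True P[OF True] prior_nonneg[OF True] ex2[OF True] by (simp add: G_def mult_mono)
          then have "(1 + \<bar>t\<bar>) * G t \<le> (1 + \<bar>t\<bar>) * (P * (exp (D0 / 2) * exp (- c * \<bar>t\<bar>)))"
            by (intro mult_left_mono) auto
          then show ?thesis by (simp add: mult_ac)
        qed
        then show "norm ((1 + \<bar>t\<bar>) * G t) \<le> norm (P * exp (D0 / 2) * ((1 + \<bar>t\<bar>) * exp (- c * \<bar>t\<bar>)))"
          using rn Gnn[of t] by simp
      qed
    qed
    have 2: "\<forall>t\<in>\<Theta>. k0 t * \<bar>t\<bar> \<le> P * exp D0 * R"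
    proof
      fix t assume t: "t \<in> \<Theta>"
      have y: "\<bar>t\<bar> / R \<le> exp (\<bar>t\<bar> / R)" using exp_ge_add_one_self[of "\<bar>t\<bar> / R"] by linarith
      have y2: "\<bar>t\<bar> \<le> R * exp (\<bar>t\<bar> / R)" using mult_left_mono[OF y, of R] Rpos by simp
      have "exp (- (\<bar>t\<bar> / R)) * \<bar>t\<bar> \<le> exp (- (\<bar>t\<bar> / R)) * (R * exp (\<bar>t\<bar> / R))"
        by (rule mult_left_mono[OF y2]) simp
      also have "\<dots> = R * (exp (\<bar>t\<bar> / R) * exp (- (\<bar>t\<bar> / R)))" by (simp add: mult_ac)
      also have "\<dots> = R" by (simp add: exp_minus_inverse)
      finally have z: "exp (- (\<bar>t\<bar> / R)) * \<bar>t\<bar> \<le> R" by simp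
      have "k0 t * \<bar>t\<bar> = \<pi> t * (exp (- real n * E t) * \<bar>t\<bar>)" by (simp add: k0_def)
      also have "\<dots> \<le> P * (exp D0 * (exp (- (\<bar>t\<bar> / R)) * \<bar>t\<bar>))"
      proof (rule mult_mono)
        have "exp (- real n * E t) * \<bar>t\<bar> \<le> (exp D0 * exp (- (\<bar>t\<bar> / R))) * \<bar>t\<bar>"
          using ex[OF t] by (rule mult_right_mono) simp
        then show "exp (- real n * E t) * \<bar>t\<bar> \<le> exp D0 * (exp (- (\<bar>t\<bar> / R)) * \<bar>t\<bar>)" by (simp add: mult.assoc)
      qed (use P[OF t] P0 in auto)
      also have "\<dots> \<le> P * (exp D0 * R)" using z P0 by (intro mult_left_mono) auto
      finally show "k0 t * \<bar>t\<bar> \<le> P * exp D0 * R" by (simp add: mult_ac)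
    qed
    show ?thesis using 1 2 by blast
  qed
  then obtain K2 where KA: "integrable lborel (\<lambda>t. (1 + \<bar>t\<bar>) * G t)"
    and K2: "\<And>t. t \<in> \<Theta> \<Longrightarrow> k0 t * \<bar>t\<bar> \<le> K2" by blast
  have K20: "0 \<le> K2" using K2[OF zero_in] by simp
  have gg: "G t \<le> (1 + \<bar>t\<bar>) * G t" "\<bar>t\<bar> * G t \<le> (1 + \<bar>t\<bar>) * G t" for t
    using Gnn[of t] by (simp_all add: distrib_right)
  have intG: "integrable lborel G"
    by (rule Bochner_Integration.integrable_bound[OF KA]) (use gg Gnn in \<open>auto intro!: AE_I2\<close>)
  have intAG: "integrable lborel (\<lambda>t. \<bar>t\<bar> * G t)"
    by (rule Bochner_Integration.integrable_bound[OF KA]) (use gg Gnn in \<open>auto intro!: AE_I2\<close>)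
  define Z0 where "Z0 = (LINT t:\<Theta>|lborel. mpost_kernel \<Theta> \<pi> \<rho> n xs (xs 0) 0 t)"
  have Z0pos: "Z0 > 0" using post_pos by (simp add: Z0_def)
  have Z0eq: "Z0 = integral\<^sup>L lborel (\<lambda>t. indicator \<Theta> t * k0 t)"
    by (simp add: Z0_def set_lebesgue_integral_def kern0)
  have intk0: "integrable lborel (\<lambda>t. indicator \<Theta> t * k0 t)"
    using post_int by (simp add: set_integrable_def kern0)
  have k0G: "k0 t \<le> exp (- real n * L / 2) * G t" if "t \<in> \<Theta>" for t
    using kbound[OF x0X _ _ that, of 0] by (simp add: kern0)
  have k0meas: "(\<lambda>t. indicator \<Theta> t * k0 t) \<in> borel_measurable lborel"
    using intk0 by (rule borel_measurable_integrable)
  have intAk0: "integrable lborel (\<lambda>t. indicator \<Theta> t * (\<bar>t\<bar> * k0 t))"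
  proof (rule Bochner_Integration.integrable_bound)
    show "integrable lborel (\<lambda>t. exp (- real n * L / 2) * (\<bar>t\<bar> * G t))" using intAG by simp
    have "(\<lambda>t. \<bar>t\<bar> * (indicator \<Theta> t * k0 t)) \<in> borel_measurable lborel"
      using k0meas by measurable
    then show "(\<lambda>t. indicator \<Theta> t * (\<bar>t\<bar> * k0 t)) \<in> borel_measurable lborel" by (simp add: mult_ac)
    show "AE t in lborel. norm (indicator \<Theta> t * (\<bar>t\<bar> * k0 t)) \<le> norm (exp (- real n * L / 2) * (\<bar>t\<bar> * G t))"
    proof (rule AE_I2)
      fix t
      show "norm (indicator \<Theta> t * (\<bar>t\<bar> * k0 t)) \<le> norm (exp (- real n * L / 2) * (\<bar>t\<bar> * G t))"
      proof (cases "t \<in> \<Theta>")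
        case True
        have "\<bar>t\<bar> * k0 t \<le> \<bar>t\<bar> * (exp (- real n * L / 2) * G t)" using k0G[OF True] by (rule mult_left_mono) simp
        then show ?thesis using True k0nn[OF True] Gnn[of t] by (simp add: mult_ac)
      qed simp
    qed
  qed
  define A where "A = integral\<^sup>L lborel (\<lambda>t. indicator \<Theta> t * (\<bar>t\<bar> * k0 t))"
  have A0: "0 \<le> A" unfolding A_def by (rule integral_nonneg_AE) (use k0nn in \<open>auto intro!: AE_I2 simp: indicator_def\<close>)
  define B where "B = real n * (P * exp (- real n * L) * (2 * M * A) + 2 * M * K2 * Z0) / (Z0 * Z0)"
  show ?thesis
    unfolding unif_B_robust_def
  proof (rule exI[of _ B], intro ballI)
    fix \<theta> x0 assume th: "\<theta> \<in> \<Theta>" and x0: "x0 \<in> X"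
    define d where "d t = \<rho> x0 t - E t" for t
    have dlip: "\<bar>d t - d 0\<bar> \<le> 2 * M * \<bar>t\<bar>" if "t \<in> \<Theta>" for t
    proof -
      have a: "\<bar>\<rho> x0 t - \<rho> x0 0\<bar> \<le> M * \<bar>t\<bar>" using lip[OF x0 that zero_in] by simp
      have b: "\<bar>E t - E 0\<bar> \<le> M * \<bar>t\<bar>" using E_lip[OF that zero_in] by simp
      have "\<bar>d t - d 0\<bar> \<le> \<bar>\<rho> x0 t - \<rho> x0 0\<bar> + \<bar>E t - E 0\<bar>" unfolding d_def by arith
      then show ?thesis using a b by linarith
    qed
    have dcont: "continuous_on \<Theta> d" unfolding d_def[abs_def]
      by (intro continuous_on_diff rcont[OF x0] E_cont)
    have kexp: "mpost_kernel \<Theta> \<pi> \<rho> n xs x0 e t = k0 t * exp (-(real n * d t) * e)" for e t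
    proof -
      have "- real n * ((1 - e) * E t + e * \<rho> x0 t) = - real n * E t + (-(real n * d t) * e)"
        by (simp add: d_def algebra_simps)
      then have "exp (- real n * ((1 - e) * E t + e * \<rho> x0 t)) = exp (- real n * E t) * exp (-(real n * d t) * e)"
        by (simp only: exp_add)
      then show ?thesis by (simp add: kern k0_def)
    qed
    define F where "F e t = indicator \<Theta> t * mpost_kernel \<Theta> \<pi> \<rho> n xs x0 e t" for e t
    define F' where "F' t = indicator \<Theta> t * (-(real n * d t) * k0 t)" for t
    define w where "w t = 2 * exp (- real n * L / 2) * real n * (\<bar>d 0\<bar> * G t + 2 * M * (\<bar>t\<bar> * G t))" for t
    have Fm: "F e \<in> borel_measurable lborel" for e
    proof -
      have "(\<lambda>t. indicator \<Theta> t *\<^sub>R exp (- real n * ((1 - e) * E t + e * \<rho> x0 t))) \<in> borel_measurable borel"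
        by (rule borel_measurable_continuous_on_indicator[OF Thb]) (intro continuous_intros E_cont rcont[OF x0])
      then have "(\<lambda>t. \<pi> t * (indicator \<Theta> t *\<^sub>R exp (- real n * ((1 - e) * E t + e * \<rho> x0 t)))) \<in> borel_measurable lborel"
        using prior_meas by (intro borel_measurable_times) auto
      moreover have "F e = (\<lambda>t. \<pi> t * (indicator \<Theta> t *\<^sub>R exp (- real n * ((1 - e) * E t + e * \<rho> x0 t))))"
        by (rule ext) (simp add: F_def kern)
      ultimately show ?thesis by simp
    qed
    have F'm: "F' \<in> borel_measurable lborel"
    proof -
      have "(\<lambda>t. indicator \<Theta> t *\<^sub>R (-(real n * d t) * exp (- real n * E t))) \<in> borel_measurable borel"
        by (rule borel_measurable_continuous_on_indicator[OF Thb]) (intro continuous_intros E_cont dcont)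
      then have "(\<lambda>t. \<pi> t * (indicator \<Theta> t *\<^sub>R (-(real n * d t) * exp (- real n * E t)))) \<in> borel_measurable lborel"
        using prior_meas by (intro borel_measurable_times) auto
      moreover have "F' = (\<lambda>t. \<pi> t * (indicator \<Theta> t *\<^sub>R (-(real n * d t) * exp (- real n * E t))))"
        by (rule ext) (simp add: F'_def k0_def)
      ultimately show ?thesis by simp
    qed
    have F0: "F 0 t = indicator \<Theta> t * k0 t" for t by (simp add: F_def kern0)
    have int0: "integrable lborel (F 0)" using intk0 by (simp add: F0[abs_def])
    have intw: "integrable lborel w" unfolding w_def using intG intAG by simp
    have lim: "((\<lambda>e. (F e t - F 0 t) / e) \<longlongrightarrow> F' t) (at_right 0)" for t
    proof (cases "t \<in> \<Theta>")
      case True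
      have der: "((\<lambda>e. k0 t * exp (-(real n * d t) * e)) has_real_derivative (-(real n * d t) * k0 t)) (at 0)"
        by (auto intro!: derivative_eq_intros)
      then have "((\<lambda>e. (k0 t * exp (-(real n * d t) * e) - k0 t * exp (-(real n * d t) * 0)) / (e - 0)) \<longlongrightarrow> (-(real n * d t) * k0 t)) (at 0)"
        unfolding has_field_derivative_iff .
      then have "((\<lambda>e. (k0 t * exp (-(real n * d t) * e) - k0 t * exp (-(real n * d t) * 0)) / (e - 0)) \<longlongrightarrow> (-(real n * d t) * k0 t)) (at_right 0)"
        by (rule tendsto_mono[OF at_le, rotated]) auto
      then show ?thesis using True by (simp add: F_def F'_def kexp)
    next
      case False
      then show ?thesis by (simp add: F_def F'_def)
    qed
    have wnn: "0 \<le> w t" for t unfolding w_def using Gnn[of t] M0 npos by simp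
    have bnd: "\<bar>F e t - F 0 t\<bar> \<le> e * w t" if e: "0 < e" "e \<le> 1/2" for e t
    proof (cases "t \<in> \<Theta>")
      case False then show ?thesis using wnn[of t] e by (simp add: F_def)
    next
      case True
      define u where "u = -(real n * d t) * e"
      have "F e t - F 0 t = k0 t * (exp u - 1)" using True by (simp add: F_def kexp u_def algebra_simps)
      then have "\<bar>F e t - F 0 t\<bar> = k0 t * \<bar>exp u - 1\<bar>" using k0nn[OF True] by (simp add: abs_mult)
      also have "\<dots> \<le> k0 t * (\<bar>u\<bar> * (1 + exp u))" using exp_ineq[of u] k0nn[OF True] by (rule mult_left_mono)
      also have "\<dots> = e * real n * \<bar>d t\<bar> * (k0 t + k0 t * exp u)"
        using e npos by (simp add: u_def abs_mult algebra_simps)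
      also have "\<dots> \<le> e * real n * (\<bar>d 0\<bar> + 2 * M * \<bar>t\<bar>) * (2 * exp (- real n * L / 2) * G t)"
      proof (rule mult_mono)
        show "e * real n * \<bar>d t\<bar> \<le> e * real n * (\<bar>d 0\<bar> + 2 * M * \<bar>t\<bar>)"
          using dlip[OF True] e npos by (intro mult_left_mono) auto
        have "k0 t * exp u = mpost_kernel \<Theta> \<pi> \<rho> n xs x0 e t" by (simp add: kexp u_def)
        also have "\<dots> \<le> exp (- real n * L / 2) * G t" using kbound[OF x0 _ e(2) True] e by simp
        finally show "k0 t + k0 t * exp u \<le> 2 * exp (- real n * L / 2) * G t" using k0G[OF True] by simp
      qed (use e npos M0 Gnn k0nn[OF True] in auto)
      also have "\<dots> = e * w t" by (simp add: w_def algebra_simps)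
      finally show ?thesis .
    qed
    have Zder: "((\<lambda>e. integral\<^sup>L lborel (F e)) has_real_derivative integral\<^sup>L lborel F') (at 0 within {0..1})"
      by (rule deriv_under_integral[of "1/2" F F' w]) (use Fm F'm int0 intw lim bnd in auto)
    have Zeq: "(LINT t:\<Theta>|lborel. mpost_kernel \<Theta> \<pi> \<rho> n xs x0 e t) = integral\<^sup>L lborel (F e)" for e
      by (simp add: set_lebesgue_integral_def F_def[abs_def])
    have Z0F: "integral\<^sup>L lborel (F 0) = Z0" by (simp add: F0[abs_def] Z0eq)
    have kder: "((\<lambda>e. mpost_kernel \<Theta> \<pi> \<rho> n xs x0 e \<theta>) has_real_derivative (-(real n * d \<theta>) * k0 \<theta>)) (at 0 within {0..1})"
      unfolding kexp by (auto intro!: derivative_eq_intros)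
    have mfun: "(\<lambda>e. mpost \<Theta> \<pi> \<rho> n xs x0 e \<theta>) = (\<lambda>e. mpost_kernel \<Theta> \<pi> \<rho> n xs x0 e \<theta> / integral\<^sup>L lborel (F e))"
      by (rule ext) (simp add: mpost_def Zeq)
    define Z' where "Z' = integral\<^sup>L lborel F'"
    define D where "D = ((-(real n * d \<theta>) * k0 \<theta>) * Z0 - k0 \<theta> * Z') / (Z0 * Z0)"
    have mder: "((\<lambda>e. mpost \<Theta> \<pi> \<rho> n xs x0 e \<theta>) has_real_derivative D) (at 0 within {0..1})"
      unfolding mfun D_def Z'_def using DERIV_divide[OF kder Zder] Z0F Z0pos kern0 by simp
    have Jmeq: "(\<lambda>t. indicator \<Theta> t * ((d t - d 0) * k0 t)) = (\<lambda>t. (-1 / real n) * F' t - d 0 * (indicator \<Theta> t * k0 t))"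
      by (rule ext) (use npos in \<open>simp add: F'_def field_simps\<close>)
    have Jm: "(\<lambda>t. indicator \<Theta> t * ((d t - d 0) * k0 t)) \<in> borel_measurable lborel"
      unfolding Jmeq by (rule borel_measurable_diff; rule borel_measurable_times; (rule measurable_const | rule F'm | rule k0meas); simp)
    have intJ: "integrable lborel (\<lambda>t. indicator \<Theta> t * ((d t - d 0) * k0 t))"
    proof (rule Bochner_Integration.integrable_bound)
      show "integrable lborel (\<lambda>t. 2 * M * (indicator \<Theta> t * (\<bar>t\<bar> * k0 t)))" using intAk0 by simp
      show "(\<lambda>t. indicator \<Theta> t * ((d t - d 0) * k0 t)) \<in> borel_measurable lborel" by (rule Jm)
      show "AE t in lborel. norm (indicator \<Theta> t * ((d t - d 0) * k0 t)) \<le> norm (2 * M * (indicator \<Theta> t * (\<bar>t\<bar> * k0 t)))"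
      proof (rule AE_I2)
        fix t
        show "norm (indicator \<Theta> t * ((d t - d 0) * k0 t)) \<le> norm (2 * M * (indicator \<Theta> t * (\<bar>t\<bar> * k0 t)))"
        proof (cases "t \<in> \<Theta>")
          case True
          have "\<bar>d t - d 0\<bar> * k0 t \<le> (2 * M * \<bar>t\<bar>) * k0 t" using dlip[OF True] k0nn[OF True] by (rule mult_right_mono)
          then show ?thesis using True k0nn[OF True] M0 by (simp add: abs_mult mult_ac)
        qed simp
      qed
    qed
    define J where "J = integral\<^sup>L lborel (\<lambda>t. indicator \<Theta> t * ((d t - d 0) * k0 t))"
    have F'fun: "F' = (\<lambda>t. (- real n) * (indicator \<Theta> t * ((d t - d 0) * k0 t)) + (- real n * d 0) * (indicator \<Theta> t * k0 t))"
      by (rule ext) (simp add: F'_def algebra_simps)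
    have Z'eq: "Z' = - real n * J + (- real n * d 0) * Z0"
      unfolding Z'_def F'fun using intJ intk0 by (simp add: J_def Z0eq)
    have Jb: "\<bar>J\<bar> \<le> 2 * M * A"
    proof -
      have "\<bar>J\<bar> \<le> integral\<^sup>L lborel (\<lambda>t. 2 * M * (indicator \<Theta> t * (\<bar>t\<bar> * k0 t)))"
        unfolding J_def
      proof (rule integral_abs_bound_integral[OF intJ])
        show "integrable lborel (\<lambda>t. 2 * M * (indicator \<Theta> t * (\<bar>t\<bar> * k0 t)))" using intAk0 by simp
        fix t
        show "\<bar>indicator \<Theta> t * ((d t - d 0) * k0 t)\<bar> \<le> 2 * M * (indicator \<Theta> t * (\<bar>t\<bar> * k0 t))"
        proof (cases "t \<in> \<Theta>")
          case True
          have "\<bar>d t - d 0\<bar> * k0 t \<le> (2 * M * \<bar>t\<bar>) * k0 t" using dlip[OF True] k0nn[OF True] by (rule mult_right_mono)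
          then show ?thesis using True k0nn[OF True] M0 by (simp add: abs_mult mult_ac)
        qed simp
      qed
      also have "\<dots> = 2 * M * A" by (simp add: A_def)
      finally show ?thesis .
    qed
    have Deq: "D = real n * (k0 \<theta> * (J - (d \<theta> - d 0) * Z0)) / (Z0 * Z0)"
      by (simp add: D_def Z'eq algebra_simps)
    have n1: "\<bar>J - (d \<theta> - d 0) * Z0\<bar> \<le> \<bar>J\<bar> + \<bar>d \<theta> - d 0\<bar> * Z0"
    proof -
      have "\<bar>J - (d \<theta> - d 0) * Z0\<bar> \<le> \<bar>J\<bar> + \<bar>(d \<theta> - d 0) * Z0\<bar>" by (rule abs_triangle_ineq4)
      then show ?thesis using Z0pos by (simp add: abs_mult)
    qed
    have n2: "k0 \<theta> * \<bar>J\<bar> \<le> P * exp (- real n * L) * (2 * M * A)"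
      by (rule mult_mono[OF K1[OF th] Jb]) (use P0 in auto)
    have n3: "k0 \<theta> * (\<bar>d \<theta> - d 0\<bar> * Z0) \<le> 2 * M * K2 * Z0"
    proof -
      have "k0 \<theta> * \<bar>d \<theta> - d 0\<bar> \<le> k0 \<theta> * (2 * M * \<bar>\<theta>\<bar>)" using dlip[OF th] k0nn[OF th] by (rule mult_left_mono)
      also have "\<dots> = 2 * M * (k0 \<theta> * \<bar>\<theta>\<bar>)" by simp
      also have "\<dots> \<le> 2 * M * K2" using K2[OF th] M0 by (intro mult_left_mono) auto
      finally have "k0 \<theta> * \<bar>d \<theta> - d 0\<bar> * Z0 \<le> 2 * M * K2 * Z0" using Z0pos by (intro mult_right_mono) auto
      then show ?thesis by (simp add: mult.assoc)
    qed
    have n4: "k0 \<theta> * \<bar>J - (d \<theta> - d 0) * Z0\<bar> \<le> P * exp (- real n * L) * (2 * M * A) + 2 * M * K2 * Z0"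
    proof -
      have "k0 \<theta> * \<bar>J - (d \<theta> - d 0) * Z0\<bar> \<le> k0 \<theta> * (\<bar>J\<bar> + \<bar>d \<theta> - d 0\<bar> * Z0)"
        using n1 k0nn[OF th] by (rule mult_left_mono)
      then show ?thesis using n2 n3 by (simp add: distrib_left)
    qed
    have DB: "\<bar>D\<bar> \<le> B"
    proof -
      have "\<bar>D\<bar> = real n * (k0 \<theta> * \<bar>J - (d \<theta> - d 0) * Z0\<bar>) / (Z0 * Z0)"
        using k0nn[OF th] Z0pos by (simp add: Deq abs_mult abs_divide)
      also have "\<dots> \<le> real n * (P * exp (- real n * L) * (2 * M * A) + 2 * M * K2 * Z0) / (Z0 * Z0)"
        using n4 npos Z0pos by (intro divide_right_mono mult_left_mono) auto
      finally show ?thesis by (simp add: B_def)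
    qed
    show "\<exists>D. ((\<lambda>\<epsilon>. mpost \<Theta> \<pi> \<rho> n xs x0 \<epsilon> \<theta>) has_real_derivative D) (at 0 within {0..1}) \<and> \<bar>D\<bar> \<le> B"
      using mder DB by blast
  qed
qed

end
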